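(* Let $\Gamma=\langle x,y,z\mid xy^{-1}=yx^{-1},\ xz^{-1}=zx^{-1},\ yz^{-1}=zy^{-1}\rangle$ with generating set $\Delta=\{x,y,z\}$. There is no homogeneous scalar quantum walk on $C_\Delta(\Gamma)$.
   Context: The Cayley graph $C_\Delta(\Gamma)$ has vertex set $\Gamma$ and directed edges $(g,g\delta)$, $g\in\Gamma,\delta\in\Delta$. Let $\ell^2(\Gamma)$ have orthonormal basis $\{|g\rangle\}_{g\in\Gamma}$ and for $\delta\in\Gamma$ let $U_\delta|g\rangle=|g\delta\rangle$. A homogeneous scalar quantum walk on $C_\Delta(\Gamma)$ is a unitary operator $W=\sum_{\delta\in\Delta}W_\delta U_\delta$ with all complex coefficients $W_\delta$ nonzero. *)

theory Defs
  imports "HOL-Analysis.Analysis" "HOL-Algebra.Algebra"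
begin

definition gamma_rels :: "('a, 'b) monoid_scheme \<Rightarrow> 'a \<Rightarrow> 'a \<Rightarrow> 'a \<Rightarrow> bool" where
  "gamma_rels H a b c \<longleftrightarrow>
     a \<otimes>\<^bsub>H\<^esub> inv\<^bsub>H\<^esub> b = b \<otimes>\<^bsub>H\<^esub> inv\<^bsub>H\<^esub> a \<and>
     a \<otimes>\<^bsub>H\<^esub> inv\<^bsub>H\<^esub> c = c \<otimes>\<^bsub>H\<^esub> inv\<^bsub>H\<^esub> a \<and>
     b \<otimes>\<^bsub>H\<^esub> inv\<^bsub>H\<^esub> c = c \<otimes>\<^bsub>H\<^esub> inv\<^bsub>H\<^esub> b"

text \<open>G (with distinguished elements x, y, z) is the group presented by generators x, y, z and
  the relations above: it is generated by x, y, z, the relations hold, and it has the universal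
  property of the presentation with respect to every group whose elements live in the same
  (infinite) type.\<close>
definition is_gamma_presentation :: "'a monoid \<Rightarrow> 'a \<Rightarrow> 'a \<Rightarrow> 'a \<Rightarrow> bool" where
  "is_gamma_presentation G x y z \<longleftrightarrow>
     group G \<and> x \<in> carrier G \<and> y \<in> carrier G \<and> z \<in> carrier G \<and>
     carrier G = generate G {x, y, z} \<and>
     gamma_rels G x y z \<and>
     (\<forall>(H :: 'a monoid) a b c. group H \<longrightarrow> a \<in> carrier H \<longrightarrow> b \<in> carrier H \<longrightarrow> c \<in> carrier H
        \<longrightarrow> gamma_rels H a b c
        \<longrightarrow> (\<exists>h \<in> hom G H. h x = a \<and> h y = b \<and> h z = c))"

definition l2 :: "('a, 'b) monoid_scheme \<Rightarrow> ('a \<Rightarrow> complex) set" where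
  "l2 G = {\<psi>. (\<forall>g. g \<notin> carrier G \<longrightarrow> \<psi> g = 0) \<and>
                (\<lambda>g. (cmod (\<psi> g))\<^sup>2) summable_on carrier G}"

definition l2_norm :: "('a, 'b) monoid_scheme \<Rightarrow> ('a \<Rightarrow> complex) \<Rightarrow> real" where
  "l2_norm G \<psi> = sqrt (infsum (\<lambda>g. (cmod (\<psi> g))\<^sup>2) (carrier G))"

text \<open>The operator W = sum over d in D of W_d U_d, where U_d |g> = |g d>,
  i.e. (W psi)(h) = sum over d in D of W_d psi(h d^-1).\<close>
definition walk_op :: "('a, 'b) monoid_scheme \<Rightarrow> 'a set \<Rightarrow> ('a \<Rightarrow> complex)
                       \<Rightarrow> ('a \<Rightarrow> complex) \<Rightarrow> ('a \<Rightarrow> complex)" where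
  "walk_op G D Wc \<psi> = (\<lambda>h. if h \<in> carrier G
       then (\<Sum>d\<in>D. Wc d * \<psi> (h \<otimes>\<^bsub>G\<^esub> inv\<^bsub>G\<^esub> d)) else 0)"

definition unitary_on_l2 :: "('a, 'b) monoid_scheme \<Rightarrow> (('a \<Rightarrow> complex) \<Rightarrow> ('a \<Rightarrow> complex)) \<Rightarrow> bool" where
  "unitary_on_l2 G W \<longleftrightarrow>
     W ` l2 G = l2 G \<and> (\<forall>\<psi>\<in>l2 G. l2_norm G (W \<psi>) = l2_norm G \<psi>)"

definition homogeneous_scalar_qw :: "('a, 'b) monoid_scheme \<Rightarrow> 'a set \<Rightarrow> ('a \<Rightarrow> complex) \<Rightarrow> bool" where
  "homogeneous_scalar_qw G D Wc \<longleftrightarrow>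
     (\<forall>d\<in>D. Wc d \<noteq> 0) \<and> unitary_on_l2 G (walk_op G D Wc)"

end

theory Submission
  imports Defs
begin

lemma fin_l2:
  assumes "finite S" "S \<subseteq> carrier G" "\<And>h. h \<notin> S \<Longrightarrow> \<psi> h = 0"
  shows "\<psi> \<in> l2 G" "l2_norm G \<psi> = sqrt (\<Sum>h\<in>S. (cmod (\<psi> h))\<^sup>2)"
proof -
  have "(\<lambda>g. (cmod (\<psi> g))\<^sup>2) summable_on carrier G \<longleftrightarrow> (\<lambda>g. (cmod (\<psi> g))\<^sup>2) summable_on S"
    by (rule summable_on_cong_neutral) (use assms in auto)
  then show "\<psi> \<in> l2 G" using assms unfolding l2_def by auto
  have "infsum (\<lambda>g. (cmod (\<psi> g))\<^sup>2) (carrier G) = infsum (\<lambda>g. (cmod (\<psi> g))\<^sup>2) S"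
    by (rule infsum_cong_neutral) (use assms in auto)
  then show "l2_norm G \<psi> = sqrt (\<Sum>h\<in>S. (cmod (\<psi> h))\<^sup>2)"
    unfolding l2_norm_def using assms by simp
qed

context group begin

lemma walk3:
  assumes "a \<in> carrier G" "b \<in> carrier G" "c \<in> carrier G" "a \<noteq> b" "a \<noteq> c" "b \<noteq> c"
  shows "walk_op G {a,b,c} W \<psi> = (\<lambda>h. if h \<in> carrier G then
     W a * \<psi> (h \<otimes> inv a) + W b * \<psi> (h \<otimes> inv b) + W c * \<psi> (h \<otimes> inv c) else 0)"
  using assms unfolding walk_op_def by (auto simp: algebra_simps)

lemma pair_orth:
  assumes ab: "a \<in> carrier G" "b \<in> carrier G" "c \<in> carrier G" "a \<noteq> b" "a \<noteq> c" "b \<noteq> c"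
    and rel: "a \<otimes> inv b = b \<otimes> inv a"
    and U: "unitary_on_l2 G (walk_op G {a,b,c} W)"
  shows "Re (W a * cnj (W b)) = 0"
proof -
  define g where "g = a \<otimes> inv b"
  have gc: "g \<in> carrier G" using ab g_def by simp
  have ga: "g \<otimes> a = b" using ab rel unfolding g_def by (simp add: m_assoc)
  have gb: "g \<otimes> b = a" using ab unfolding g_def by (simp add: m_assoc)
  have lc: "\<And>u v w. u \<in> carrier G \<Longrightarrow> v \<in> carrier G \<Longrightarrow> w \<in> carrier G \<Longrightarrow> u \<otimes> v = u \<otimes> w \<longleftrightarrow> v = w"
    using Units_l_cancel[of u v w] by (simp add: Units_eq)
  have g1: "g \<noteq> \<one>" using ab inv_solve_right'[of "\<one>" a b] unfolding g_def by simp
  have gcc: "g \<otimes> c \<in> carrier G" using gc ab by simp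
  have gca: "g \<otimes> c \<noteq> a" using gb gc ab lc[of g c b] by auto
  have gcb: "g \<otimes> c \<noteq> b" using ga gc ab lc[of g c a] by auto
  have gc3: "g \<otimes> c \<noteq> c" using g1 gc ab by simp
  have eq1: "\<And>h d. h \<in> carrier G \<Longrightarrow> d \<in> carrier G \<Longrightarrow> h \<otimes> inv d = \<one> \<longleftrightarrow> h = d"
    by (simp add: inv_solve_right')
  have eqg: "\<And>h d. h \<in> carrier G \<Longrightarrow> d \<in> carrier G \<Longrightarrow> h \<otimes> inv d = g \<longleftrightarrow> h = g \<otimes> d"
    using gc by (simp add: inv_solve_right')
  define \<psi>0 :: "'a \<Rightarrow> complex" where "\<psi>0 = (\<lambda>h. if h = \<one> then 1 else 0)"
  define \<psi>1 :: "'a \<Rightarrow> complex" where "\<psi>1 = (\<lambda>h. if h = \<one> \<or> h = g then 1 else 0)"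
  have W0: "walk_op G {a,b,c} W \<psi>0 = (\<lambda>h. if h = a then W a else if h = b then W b else if h = c then W c else 0)"
    unfolding walk3[OF ab] \<psi>0_def using ab eq1 by (auto intro!: ext)
  have W1: "walk_op G {a,b,c} W \<psi>1 = (\<lambda>h. if h = a \<or> h = b then W a + W b else if h = c \<or> h = g \<otimes> c then W c else 0)"
  proof
    fix h
    show "walk_op G {a,b,c} W \<psi>1 h = (if h = a \<or> h = b then W a + W b else if h = c \<or> h = g \<otimes> c then W c else 0)"
    proof (cases "h \<in> carrier G")
      case True
      have ta: "\<psi>1 (h \<otimes> inv a) = (if h = a \<or> h = b then 1 else 0)"
        unfolding \<psi>1_def using eq1[OF True ab(1)] eqg[OF True ab(1)] ga by auto
      have tb: "\<psi>1 (h \<otimes> inv b) = (if h = a \<or> h = b then 1 else 0)"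
        unfolding \<psi>1_def using eq1[OF True ab(2)] eqg[OF True ab(2)] gb by auto
      have tc: "\<psi>1 (h \<otimes> inv c) = (if h = c \<or> h = g \<otimes> c then 1 else 0)"
        unfolding \<psi>1_def using eq1[OF True ab(3)] eqg[OF True ab(3)] by auto
      show ?thesis unfolding walk3[OF ab] using True ta tb tc ab gca gcb gc3
        by (simp only: if_True) (auto simp: algebra_simps)
    next
      case False
      then show ?thesis unfolding walk3[OF ab] using ab gcc by auto
    qed
  qed
  have p0: "\<psi>0 \<in> l2 G" "l2_norm G \<psi>0 = sqrt (\<Sum>h\<in>{\<one>}. (cmod (\<psi>0 h))\<^sup>2)"
    using fin_l2[of "{\<one>}" G \<psi>0] by (auto simp: \<psi>0_def)
  have p1: "\<psi>1 \<in> l2 G" "l2_norm G \<psi>1 = sqrt (\<Sum>h\<in>{\<one>, g}. (cmod (\<psi>1 h))\<^sup>2)"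
    using fin_l2[of "{\<one>, g}" G \<psi>1] by (auto simp: \<psi>1_def gc)
  have q0: "l2_norm G (walk_op G {a,b,c} W \<psi>0) = sqrt (\<Sum>h\<in>{a,b,c}. (cmod (walk_op G {a,b,c} W \<psi>0 h))\<^sup>2)"
    by (rule fin_l2) (use ab in \<open>auto simp: W0\<close>)
  have q1: "l2_norm G (walk_op G {a,b,c} W \<psi>1) = sqrt (\<Sum>h\<in>{a,b,c,g \<otimes> c}. (cmod (walk_op G {a,b,c} W \<psi>1 h))\<^sup>2)"
    by (rule fin_l2) (use ab gcc in \<open>auto simp: W1\<close>)
  have n0: "l2_norm G (walk_op G {a,b,c} W \<psi>0) = l2_norm G \<psi>0" using U p0 unfolding unitary_on_l2_def by blast
  have n1: "l2_norm G (walk_op G {a,b,c} W \<psi>1) = l2_norm G \<psi>1" using U p1 unfolding unitary_on_l2_def by blast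
  have e0: "(cmod (W a))\<^sup>2 + (cmod (W b))\<^sup>2 + (cmod (W c))\<^sup>2 = 1"
  proof -
    have s0: "(\<Sum>h\<in>{a,b,c}. (cmod (walk_op G {a,b,c} W \<psi>0 h))\<^sup>2) = (\<Sum>h\<in>{\<one>}. (cmod (\<psi>0 h))\<^sup>2)"
      using n0 unfolding q0 p0(2) real_sqrt_eq_iff .
    then show ?thesis unfolding W0 using ab by (simp add: \<psi>0_def)
  qed
  have e1: "2 * (cmod (W a + W b))\<^sup>2 + 2 * (cmod (W c))\<^sup>2 = 2"
  proof -
    have s1: "(\<Sum>h\<in>{a,b,c,g \<otimes> c}. (cmod (walk_op G {a,b,c} W \<psi>1 h))\<^sup>2) = (\<Sum>h\<in>{\<one>, g}. (cmod (\<psi>1 h))\<^sup>2)"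
      using n1 unfolding q1 p1(2) real_sqrt_eq_iff .
    then show ?thesis unfolding W1 using ab gca gcb gc3 g1 by (simp add: \<psi>1_def)
  qed
  show ?thesis using e0 e1 unfolding cmod_power2 by (simp add: power2_eq_square algebra_simps)
qed

end

lemma no3:
  fixes u v w :: complex
  assumes "u \<noteq> 0" "v \<noteq> 0" "w \<noteq> 0"
    and "Re (u * cnj v) = 0" "Re (u * cnj w) = 0" "Re (v * cnj w) = 0"
  shows False
proof -
  define u1 u2 v1 v2 w1 w2 where "u1 = Re u" "u2 = Im u" "v1 = Re v" "v2 = Im v" "w1 = Re w" "w2 = Im w"
  have pu: "u1\<^sup>2 + u2\<^sup>2 > 0" using assms(1) complex_neq_0 u1_u2_v1_v2_w1_w2_def by auto
  have pv: "v1\<^sup>2 + v2\<^sup>2 > 0" using assms(2) complex_neq_0 u1_u2_v1_v2_w1_w2_def by auto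
  have pw: "w1\<^sup>2 + w2\<^sup>2 > 0" using assms(3) complex_neq_0 u1_u2_v1_v2_w1_w2_def by auto
  have o1: "u1 * v1 + u2 * v2 = 0" using assms(4) u1_u2_v1_v2_w1_w2_def by simp
  have o2: "u1 * w1 + u2 * w2 = 0" using assms(5) u1_u2_v1_v2_w1_w2_def by simp
  have o3: "v1 * w1 + v2 * w2 = 0" using assms(6) u1_u2_v1_v2_w1_w2_def by simp
  have key: "(u1\<^sup>2+u2\<^sup>2) * (v1 * w1+v2 * w2) = (u1 * v1+u2 * v2) * (u1 * w1+u2 * w2) + (u1 * v2-u2 * v1) * (u1 * w2-u2 * w1)"
    by (simp add: power2_eq_square algebra_simps)
  have k0: "(u1 * v2-u2 * v1) * (u1 * w2-u2 * w1) = 0" using key o1 o2 o3 by simp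
  have kv: "(u1 * v2-u2 * v1)\<^sup>2 + (u1 * v1+u2 * v2)\<^sup>2 = (u1\<^sup>2+u2\<^sup>2) * (v1\<^sup>2+v2\<^sup>2)"
    by (simp add: power2_eq_square algebra_simps)
  have kw: "(u1 * w2-u2 * w1)\<^sup>2 + (u1 * w1+u2 * w2)\<^sup>2 = (u1\<^sup>2+u2\<^sup>2) * (w1\<^sup>2+w2\<^sup>2)"
    by (simp add: power2_eq_square algebra_simps)
  have "u1 * v2-u2 * v1 \<noteq> 0" using kv o1 pu pv by (metis add_cancel_right_right mult_pos_pos power_zero_numeral less_irrefl zero_power2)
  moreover have "u1 * w2-u2 * w1 \<noteq> 0" using kw o2 pu pw by (metis add_cancel_right_right mult_pos_pos less_irrefl zero_power2)
  ultimately show False using k0 by simp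
qed

definition bxor :: "bool \<times> bool \<Rightarrow> bool \<times> bool \<Rightarrow> bool \<times> bool" where
  "bxor P Q = (fst P \<noteq> fst Q, snd P \<noteq> snd Q)"

lemma bxor_assoc: "bxor (bxor p q) r = bxor p (bxor q r)"
  unfolding bxor_def by auto

lemma distinct_gens:
  fixes G :: "'a monoid" and x y z :: 'a
  assumes "infinite (UNIV :: 'a set)" and P: "is_gamma_presentation G x y z"
  shows "x \<noteq> y \<and> x \<noteq> z \<and> y \<noteq> z"
proof -
  obtain f :: "nat \<Rightarrow> 'a" where f: "inj f" using infinite_countable_subset[OF assms(1)] by blast
  define e :: "bool \<times> bool \<Rightarrow> nat" where "e = (\<lambda>(p,q). of_bool p + 2 * of_bool q)"
  have "inj e" unfolding e_def inj_def by auto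
  define F where "F = f \<circ> e"
  have iF: "inj F" unfolding F_def using f \<open>inj e\<close> by (simp add: inj_compose)
  define H :: "'a monoid" where "H = \<lparr>carrier = range F, mult = (\<lambda>u v. F (bxor (inv_into UNIV F u) (inv_into UNIV F v))), one = F (False, False)\<rparr>"
  have mH: "\<And>p q. F p \<otimes>\<^bsub>H\<^esub> F q = F (bxor p q)" unfolding H_def using iF by simp
  have cH: "carrier H = range F" "\<one>\<^bsub>H\<^esub> = F (False, False)" unfolding H_def by simp_all
  have gH: "group H"
  proof (rule groupI)
    show "\<And>u v. u \<in> carrier H \<Longrightarrow> v \<in> carrier H \<Longrightarrow> u \<otimes>\<^bsub>H\<^esub> v \<in> carrier H"
      using mH cH by auto
    show "\<one>\<^bsub>H\<^esub> \<in> carrier H" using cH by simp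
    fix u v w assume "u \<in> carrier H" "v \<in> carrier H" "w \<in> carrier H"
    then obtain p q r where "u = F p" "v = F q" "w = F r" using cH by auto
    then show "u \<otimes>\<^bsub>H\<^esub> v \<otimes>\<^bsub>H\<^esub> w = u \<otimes>\<^bsub>H\<^esub> (v \<otimes>\<^bsub>H\<^esub> w)"
      by (simp only: mH bxor_assoc)
  next
    show "\<And>u. u \<in> carrier H \<Longrightarrow> \<one>\<^bsub>H\<^esub> \<otimes>\<^bsub>H\<^esub> u = u"
      using mH cH by (auto simp: bxor_def)
    fix u assume u: "u \<in> carrier H"
    then obtain p where p: "u = F p" using cH by auto
    have "bxor p p = (False, False)" unfolding bxor_def by simp
    then have "u \<otimes>\<^bsub>H\<^esub> u = \<one>\<^bsub>H\<^esub>" using p mH cH by metis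
    then show "\<exists>v\<in>carrier H. v \<otimes>\<^bsub>H\<^esub> u = \<one>\<^bsub>H\<^esub>" using u by blast
  qed
  have invH: "\<And>u. u \<in> carrier H \<Longrightarrow> inv\<^bsub>H\<^esub> u = u"
  proof -
    fix u assume u: "u \<in> carrier H"
    have "u \<otimes>\<^bsub>H\<^esub> u = \<one>\<^bsub>H\<^esub>" using u mH cH by (auto simp: bxor_def)
    then show "inv\<^bsub>H\<^esub> u = u" using group.inv_equality[OF gH] u by blast
  qed
  have comH: "\<And>u v. u \<in> carrier H \<Longrightarrow> v \<in> carrier H \<Longrightarrow> u \<otimes>\<^bsub>H\<^esub> v = v \<otimes>\<^bsub>H\<^esub> u"
  proof -
    fix u v assume "u \<in> carrier H" "v \<in> carrier H"
    then obtain p q where "u = F p" "v = F q" using cH by auto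
    moreover have "bxor p q = bxor q p" unfolding bxor_def by auto
    ultimately show "u \<otimes>\<^bsub>H\<^esub> v = v \<otimes>\<^bsub>H\<^esub> u" by (simp only: mH)
  qed
  define a b c where "a = F (False, False)" "b = F (True, False)" "c = F (False, True)"
  have abc: "a \<in> carrier H" "b \<in> carrier H" "c \<in> carrier H" using cH a_b_c_def by auto
  have "gamma_rels H a b c" unfolding gamma_rels_def using abc invH comH by simp
  then obtain h where h: "h \<in> hom G H" "h x = a" "h y = b" "h z = c"
    using P gH abc unfolding is_gamma_presentation_def by blast
  have "a \<noteq> b" "a \<noteq> c" "b \<noteq> c" using iF unfolding a_b_c_def inj_def by blast+
  then show ?thesis using h by metis
qed

theorem mainTheorem6:
  fixes G :: "'a monoid" and x y z :: 'a
  assumes "infinite (UNIV :: 'a set)"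
    and "is_gamma_presentation G x y z"
  shows "\<not> (\<exists>Wc. homogeneous_scalar_qw G {x, y, z} Wc)"
proof
  assume "\<exists>Wc. homogeneous_scalar_qw G {x, y, z} Wc"
  then obtain W where W: "homogeneous_scalar_qw G {x, y, z} W" by blast
  have P: "group G" "x \<in> carrier G" "y \<in> carrier G" "z \<in> carrier G" "gamma_rels G x y z"
    using assms(2) unfolding is_gamma_presentation_def by auto
  have D: "x \<noteq> y" "x \<noteq> z" "y \<noteq> z" using distinct_gens[OF assms] by auto
  have nz: "W x \<noteq> 0" "W y \<noteq> 0" "W z \<noteq> 0" using W unfolding homogeneous_scalar_qw_def by auto
  have U: "unitary_on_l2 G (walk_op G {x, y, z} W)" using W unfolding homogeneous_scalar_qw_def by auto
  have s1: "{x,z,y} = {x,y,z}" "{y,z,x} = {x,y,z}" by auto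
  have r1: "Re (W x * cnj (W y)) = 0"
    using group.pair_orth[OF P(1) P(2) P(3) P(4) D(1) D(2) D(3)] P(5) U unfolding gamma_rels_def by blast
  have r2: "Re (W x * cnj (W z)) = 0"
    using group.pair_orth[OF P(1) P(2) P(4) P(3) D(2) D(1) D(3)[symmetric], of W] P(5) U
    unfolding gamma_rels_def s1 by blast
  have r3: "Re (W y * cnj (W z)) = 0"
    using group.pair_orth[OF P(1) P(3) P(4) P(2) D(3) D(1)[symmetric] D(2)[symmetric], of W] P(5) U
    unfolding gamma_rels_def s1 by blast
  show False using no3[OF nz r1 r2 r3] .
qed

end
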